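(* Let $A\in\mathbb{R}^{n\times n}$ with rows $a_1^T,\dots,a_n^T$ and $B=(b_1,\dots,b_n)^T$ with all $b_j\neq0$. Let $\lambda_1,\dots,\lambda_n$ be pairwise distinct real numbers, none an eigenvalue of $A$. For each $i$ let $H_i$ be the affine hull of the row vectors $k_{ij}=\frac{1}{b_j}(a_j^T-\lambda_ie_j^T)$, $j=1,\dots,n$ (an affine hyperplane of $\mathbb{R}^{1\times n}$). Then $H_1\cap\dots\cap H_n\neq\emptyset$ if and only if $(A,B)$ is controllable; in that case the intersection is a single point $K$, and it satisfies $$\det(\lambda I-A+BK)=\prod_{i=1}^n(\lambda-\lambda_i).$$
   Context: $e_j$ denotes the $j$-th canonical basis vector of $\mathbb{R}^n$; $(A,B)$ controllable means $(B\;AB\;\cdots\;A^{n-1}B)$ is invertible. *)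

theory Defs
  imports "HOL-Analysis.Analysis"
begin

primrec matpow :: "real^'n^'n \<Rightarrow> nat \<Rightarrow> real^'n^'n" where
  "matpow A 0 = mat 1"
| "matpow A (Suc k) = A ** matpow A k"

definition is_eigenvalue :: "real^'n^'n \<Rightarrow> real \<Rightarrow> bool" where
  "is_eigenvalue A mu \<longleftrightarrow> (\<exists>v. v \<noteq> 0 \<and> A *v v = mu *s v)"

text \<open>(A,B) controllable: the n x n matrix (B  AB ... A^(n-1)B) is invertible.
  The column index type 'n is identified with {0..<n} via an enumeration f;
  column i of C is A^(f i) B. (Invertibility does not depend on the chosen enumeration.)\<close>
definition controllable :: "real^'n^'n \<Rightarrow> real^'n \<Rightarrow> bool" where
  "controllable A B \<longleftrightarrow>
     (\<exists>f C. bij_betw f (UNIV :: 'n set) {..<CARD('n)} \<and>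
            (\<forall>i. column i C = matpow A (f i) *v B) \<and> invertible C)"

definition kvec :: "real^'n^'n \<Rightarrow> real^'n \<Rightarrow> real \<Rightarrow> 'n \<Rightarrow> real^'n" where
  "kvec A B lam j = (1 / B $ j) *\<^sub>R (A $ j - lam *\<^sub>R axis j 1)"

definition outer :: "real^'n \<Rightarrow> real^'n \<Rightarrow> real^'n^'n" where
  "outer B K = (\<chi> i j. B $ i * K $ j)"

end

theory Submission
  imports Defs
begin

lemma mv_shift: "(A - x *\<^sub>R mat 1) *v v = A *v v - x *\<^sub>R (v::real^'n)"
  by (simp add: matrix_vector_mult_diff_rdistrib flip: scaleR_matrix_vector_assoc)

lemma outer_mv: "outer B K *v x = (K \<bullet> x) *\<^sub>R (B::real^'n)"
  unfolding vec_eq_iff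
  by (simp add: matrix_vector_mult_def outer_def inner_vec_def sum_distrib_left mult_ac)

lemma not_eig_inv: "\<not> is_eigenvalue A x \<Longrightarrow> invertible (A - x *\<^sub>R mat 1)"
  unfolding invertible_left_inverse matrix_left_invertible_ker is_eigenvalue_def
  by (auto simp: mv_shift scalar_mult_eq_scaleR)

lemma mv_cols: "(\<chi> r j. v j $ r) *v c = (\<Sum>j\<in>UNIV. c$j *\<^sub>R (v j :: real^'n))"
  by (simp add: vec_eq_iff matrix_vector_mult_def mult.commute)

lemma tmv_cols: "(transpose (\<chi> r j. v j $ r)) *v K = (\<chi> j. K \<bullet> (v j :: real^'n))"
  by (simp add: vec_eq_iff matrix_vector_mult_def transpose_def inner_vec_def mult.commute)

lemma cols_M: "columns (\<chi> r j. v j $ r) = range (v :: 'n \<Rightarrow> real^'n)"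
  by (auto simp: columns_def column_def vec_eq_iff)

lemma Amv_sum: "(A::real^'n^'n) *v (\<Sum>i\<in>UNIV. c i *\<^sub>R v i) = (\<Sum>i\<in>UNIV. c i *\<^sub>R (A *v v i))"
  by (simp add: vec.sum matrix_scaleR_vector_ac scaleR_matrix_vector_assoc)

lemma supp_lemma:
  fixes v :: "'n \<Rightarrow> real^'n" and A :: "real^'n^'n" and c :: "real^'n"
  assumes Av: "\<And>i. A *v v i = B + lam i *\<^sub>R v i" and inj: "inj lam"
    and hyp: "\<And>c::real^'n. (\<Sum>i\<in>UNIV. c$i *\<^sub>R v i) = 0 \<Longrightarrow> (\<Sum>i\<in>UNIV. c$i) = 0"
  shows "(\<Sum>i\<in>UNIV. c$i *\<^sub>R v i) = 0 \<Longrightarrow> c = 0"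
proof (induction "card {i. c$i \<noteq> 0}" arbitrary: c rule: less_induct)
  case less
  show ?case
  proof (rule ccontr)
    assume "c \<noteq> 0"
    then obtain k where k: "c$k \<noteq> 0" by (auto simp: vec_eq_iff)
    define c' where "c' = (\<chi> i. c$i * (lam i - lam k))"
    have "A *v (\<Sum>i\<in>UNIV. c$i *\<^sub>R v i) = 0" using less.prems by simp
    hence "(\<Sum>i\<in>UNIV. c$i *\<^sub>R (B + lam i *\<^sub>R v i)) = 0"
      by (simp add: Amv_sum Av)
    hence "(\<Sum>i\<in>UNIV. c$i) *\<^sub>R B + (\<Sum>i\<in>UNIV. (c$i * lam i) *\<^sub>R v i) = 0"
      by (simp add: scaleR_add_right sum.distrib scaleR_sum_left)
    hence s1: "(\<Sum>i\<in>UNIV. (c$i * lam i) *\<^sub>R v i) = 0"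
      using hyp[OF less.prems] by simp
    have "(\<Sum>i\<in>UNIV. c'$i *\<^sub>R v i) = (\<Sum>i\<in>UNIV. (c$i * lam i) *\<^sub>R v i) - lam k *\<^sub>R (\<Sum>i\<in>UNIV. c$i *\<^sub>R v i)"
      by (simp add: c'_def algebra_simps scaleR_sum_right sum_subtractf)
    hence c'0: "(\<Sum>i\<in>UNIV. c'$i *\<^sub>R v i) = 0" using s1 less.prems by simp
    have sub: "{i. c'$i \<noteq> 0} \<subset> {i. c$i \<noteq> 0}"
      using k by (auto simp: c'_def)
    have "card {i. c'$i \<noteq> 0} < card {i. c$i \<noteq> 0}"
      by (rule psubset_card_mono[OF _ sub]) simp
    hence "c' = 0" using less.hyps c'0 by blast
    hence z: "\<And>i. i \<noteq> k \<Longrightarrow> c$i = 0"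
      using inj by (auto simp: c'_def vec_eq_iff inj_eq)
    have "(\<Sum>i\<in>UNIV. c$i) = (\<Sum>i\<in>UNIV. if i = k then c$k else 0)"
      by (rule sum.cong) (auto simp: z)
    also have "\<dots> = c$k" by simp
    finally show False using hyp[OF less.prems] k by simp
  qed
qed

lemma ctrl_iff: "controllable A B \<longleftrightarrow> span ((\<lambda>k. matpow A k *v B) ` {..<CARD('n)}) = (UNIV :: (real^'n) set)"
proof
  assume "controllable A B"
  then obtain f and C :: "real^'n^'n" where f: "bij_betw f (UNIV :: 'n set) {..<CARD('n)}"
    and col: "\<forall>i. column i C = matpow A (f i) *v B" and inv: "invertible C"
    unfolding controllable_def by blast
  have "columns C = (\<lambda>k. matpow A k *v B) ` (f ` UNIV)"
    using col by (auto simp: columns_def)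
  also have "f ` UNIV = {..<CARD('n)}" using f by (simp add: bij_betw_def)
  finally have cc: "columns C = (\<lambda>k. matpow A k *v B) ` {..<CARD('n)}" .
  from inv obtain C' where "C ** C' = mat 1" by (auto simp: invertible_right_inverse)
  hence "vec.span (columns C) = UNIV" using matrix_right_invertible_span_columns by blast
  thus "span ((\<lambda>k. matpow A k *v B) ` {..<CARD('n)}) = UNIV" by (simp add: cc span_vec_eq)
next
  assume sp: "span ((\<lambda>k. matpow A k *v B) ` {..<CARD('n)}) = (UNIV :: (real^'n) set)"
  obtain f where f: "bij_betw f (UNIV :: 'n set) {0..<card (UNIV::'n set)}"
    using ex_bij_betw_finite_nat[of "UNIV :: 'n set"] by auto
  hence f': "bij_betw f (UNIV :: 'n set) {..<CARD('n)}" by (simp add: atLeast0LessThan)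
  define C :: "real^'n^'n" where "C = (\<chi> r i. (matpow A (f i) *v B) $ r)"
  have col: "\<forall>i. column i C = matpow A (f i) *v B" by (simp add: C_def column_def vec_eq_iff)
  have "columns C = (\<lambda>k. matpow A k *v B) ` (f ` UNIV)"
    using col by (auto simp: columns_def)
  also have "f ` UNIV = {..<CARD('n)}" using f' by (simp add: bij_betw_def)
  finally have cc: "columns C = (\<lambda>k. matpow A k *v B) ` {..<CARD('n)}" .
  have "vec.span (columns C) = UNIV" using sp by (simp add: cc span_vec_eq)
  hence "\<exists>C'. C ** C' = mat 1" using matrix_right_invertible_span_columns by blast
  hence "invertible C" by (simp add: invertible_right_inverse)
  thus "controllable A B" unfolding controllable_def using f' col by blast
qed

lemma stab:
  fixes g :: "nat \<Rightarrow> real^'n"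
  assumes gk: "g k \<in> span (g ` {..<k})" and gs: "\<And>j. g (Suc j) = A *v g j"
  shows "g m \<in> span (g ` {..<k})"
proof (induction m)
  case 0
  then show ?case using gk by (cases k) (auto intro: span_base)
next
  case (Suc m)
  show ?case
  proof (cases "Suc m \<le> k")
    case True
    then show ?thesis using gk by (cases "Suc m = k") (auto intro: span_base)
  next
    case False
    have sub: "(*v) A ` g ` {..<k} \<subseteq> span (g ` {..<k})"
    proof
      fix y assume "y \<in> (*v) A ` g ` {..<k}"
      then obtain j where j: "j < k" "y = g (Suc j)" by (auto simp: gs)
      show "y \<in> span (g ` {..<k})"
      proof (cases "Suc j = k")
        case True thus ?thesis using gk j by simp
      next
        case False thus ?thesis using j by (auto intro: span_base)
      qed
    qed
    have "g (Suc m) \<in> (*v) A ` span (g ` {..<k})" using Suc by (simp add: gs)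
    also have "\<dots> = span ((*v) A ` g ` {..<k})"
      by (simp add: real_vector.linear_span_image matrix_vector_mul_linear)
    also have "\<dots> \<subseteq> span (g ` {..<k})" using sub by (simp add: span_minimal)
    finally show ?thesis .
  qed
qed

lemma exk:
  fixes g :: "nat \<Rightarrow> real^'n"
  shows "\<exists>k\<le>CARD('n). g k \<in> span (g ` {..<k})"
proof (rule ccontr)
  assume "\<not> ?thesis"
  hence nk: "\<And>k. k \<le> CARD('n) \<Longrightarrow> g k \<notin> span (g ` {..<k})" by blast
  have "k \<le> Suc CARD('n) \<Longrightarrow> independent (g ` {..<k}) \<and> card (g ` {..<k}) = k" for k
  proof (induction k)
    case 0 then show ?case by (simp add: real_vector.independent_empty)
  next
    case (Suc k)
    have "g k \<notin> span (g ` {..<k})" using nk Suc.prems by simp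
    hence "g k \<notin> g ` {..<k}" by (auto intro: span_base)
    moreover have "{..<Suc k} = insert k {..<k}" by auto
    ultimately show ?case using Suc \<open>g k \<notin> span (g ` {..<k})\<close>
      by (simp add: real_vector.independent_insert)
  qed
  from this[of "Suc CARD('n)"] have i: "independent (g ` {..<Suc CARD('n)})"
     and c: "card (g ` {..<Suc CARD('n)}) = Suc CARD('n)" by simp_all
  have "card (g ` {..<Suc CARD('n)}) \<le> DIM(real^'n)" by (rule independent_card_le[OF i])
  thus False unfolding c DIM_cart by simp
qed

lemma span_all:
  fixes A :: "real^'n^'n"
  shows "span (range (\<lambda>k. matpow A k *v B)) = span ((\<lambda>k. matpow A k *v B) ` {..<CARD('n)})"
proof -
  define g where "g k = matpow A k *v B" for k
  have gs: "g (Suc j) = A *v g j" for j by (simp add: g_def matrix_vector_mul_assoc)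
  obtain k where k: "k \<le> CARD('n)" "g k \<in> span (g ` {..<k})" using exk by blast
  have all: "g m \<in> span (g ` {..<CARD('n)})" for m
  proof -
    have "g m \<in> span (g ` {..<k})" using stab[of g k A m, OF k(2) gs] .
    also have "\<dots> \<subseteq> span (g ` {..<CARD('n)})" using k(1) by (intro span_mono image_mono) auto
    finally show ?thesis .
  qed
  have "span (range g) \<subseteq> span (g ` {..<CARD('n)})"
    by (rule span_minimal) (auto simp: all subspace_span)
  moreover have "span (g ` {..<CARD('n)}) \<subseteq> span (range g)" by (intro span_mono image_mono) auto
  ultimately have "span (range g) = span (g ` {..<CARD('n)})" by blast
  thus ?thesis by (simp add: g_def[abs_def])
qed

lemma inv_in_W:
  fixes M :: "real^'n^'n"
  assumes W: "subspace W" and MW: "\<And>x. x \<in> W \<Longrightarrow> M *v x \<in> W" and BW: "B \<in> W"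
    and inv: "invertible M"
  shows "\<exists>w\<in>W. M *v w = B"
proof -
  have inj: "inj ((*v) M)" using inv by (rule inj_matrix_vector_mult)
  have "dim ((*v) M ` W) = dim W"
    by (rule dim_image_eq[OF matrix_vector_mul_linear]) (use inj in \<open>auto simp: inj_on_def inj_def\<close>)
  moreover have sub: "(*v) M ` W \<subseteq> W" using MW by auto
  ultimately have "span ((*v) M ` W) = span W" by (intro dim_eq_span) auto
  moreover have "span ((*v) M ` W) = (*v) M ` W"
    by (simp add: real_vector.linear_span_image matrix_vector_mul_linear span_eq_iff[THEN iffD2, OF W])
  ultimately have "(*v) M ` W = W" using W by (simp add: span_eq_iff)
  thus ?thesis using BW by force
qed


lemma H_char:
  fixes A :: "real^'n^'n"
  assumes Bnz: "\<forall>j. B$j \<noteq> 0" and inv: "Ai' ** (A - x *\<^sub>R mat 1) = mat 1" "(A - x *\<^sub>R mat 1) ** Ai' = mat 1"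
  shows "affine hull (range (kvec A B x)) = {K. K \<bullet> (Ai' *v B) = 1}"
proof -
  let ?Ai = "A - x *\<^sub>R mat 1"
  let ?v = "Ai' *v B"
  have Aiv: "?Ai *v ?v = B" using inv(2) by (simp add: matrix_vector_mul_assoc)
  have row: "?Ai $ j = A$j - x *\<^sub>R axis j 1" for j by (simp add: vec_eq_iff mat_def axis_def)
  have kv: "kvec A B x j = (1 / B$j) *\<^sub>R (?Ai $ j)" for j by (simp only: kvec_def row)
  have kvv: "kvec A B x j \<bullet> ?v = 1" for j
  proof -
    have "?Ai $ j \<bullet> ?v = B $ j" using matrix_vector_mul_component[of ?Ai ?v j] Aiv by simp
    thus ?thesis using Bnz by (simp add: kv)
  qed
  show ?thesis
  proof
    show "affine hull (range (kvec A B x)) \<subseteq> {K. K \<bullet> ?v = 1}"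
    proof (rule hull_minimal)
      show "range (kvec A B x) \<subseteq> {K. K \<bullet> ?v = 1}" using kvv by auto
      show "affine {K. K \<bullet> ?v = 1}" using affine_hyperplane[of ?v 1] by (simp add: inner_commute)
    qed
  next
    show "{K. K \<bullet> ?v = 1} \<subseteq> affine hull (range (kvec A B x))"
    proof
      fix K assume "K \<in> {K. K \<bullet> ?v = 1}"
      hence K1: "K \<bullet> ?v = 1" by simp
      define d where "d = transpose Ai' *v K"
      have "transpose ?Ai ** transpose Ai' = mat 1"
        using inv(1) by (simp flip: matrix_transpose_mul add: transpose_mat)
      hence Kd: "transpose ?Ai *v d = K" unfolding d_def by (metis matrix_vector_mul_assoc matrix_vector_mul_lid)
      have Ksum: "K = (\<Sum>j\<in>UNIV. d$j *\<^sub>R ?Ai $ j)"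
        using Kd[symmetric] matrix_vector_column[of "transpose ?Ai" d]
        by (simp only: transpose_transpose scalar_mult_eq_scaleR)
      define e where "e j = d$j * B$j" for j
      have Ke: "K = (\<Sum>j\<in>UNIV. e j *\<^sub>R kvec A B x j)"
        unfolding Ksum using Bnz by (intro sum.cong) (auto simp: e_def kv)
      have "d \<bullet> B = d \<bullet> (?Ai *v ?v)" by (simp add: Aiv)
      also have "\<dots> = (d v* ?Ai) \<bullet> ?v" by (simp add: dot_lmul_matrix)
      also have "\<dots> = 1" using Kd K1 by simp
      finally have e1: "sum e UNIV = 1" by (simp add: e_def inner_vec_def)
      obtain j0 :: 'n where True by simp
      let ?a = "kvec A B x j0"
      have ah: "affine hull (range (kvec A B x)) = (\<lambda>y. ?a + y) ` span ((\<lambda>y. -?a + y) ` range (kvec A B x))"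
        by (rule affine_hull_span_gen) (auto intro: hull_inc)
      have "K - ?a = (\<Sum>j\<in>UNIV. e j *\<^sub>R kvec A B x j) - (\<Sum>j\<in>UNIV. e j) *\<^sub>R ?a"
        using Ke e1 by simp
      also have "\<dots> = (\<Sum>j\<in>UNIV. e j *\<^sub>R (-?a + kvec A B x j))"
        by (simp add: scaleR_sum_left sum_subtractf algebra_simps)
      finally have eqK: "K - ?a = (\<Sum>j\<in>UNIV. e j *\<^sub>R (-?a + kvec A B x j))" .
      have "(\<Sum>j\<in>UNIV. e j *\<^sub>R (-?a + kvec A B x j)) \<in> span ((\<lambda>y. -?a + y) ` range (kvec A B x))"
        apply (rule span_sum) apply (rule span_scale) apply (rule span_base) by blast
      hence "K - ?a \<in> span ((\<lambda>y. -?a + y) ` range (kvec A B x))" by (simp only: eqK)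
      hence "?a + (K - ?a) \<in> affine hull (range (kvec A B x))" unfolding ah by blast
      thus "K \<in> affine hull (range (kvec A B x))" by simp
    qed
  qed
qed

theorem mainTheorem7:
  fixes A :: "real^'n^'n" and B :: "real^'n" and lam :: "'n \<Rightarrow> real"
  assumes "\<forall>j. B $ j \<noteq> 0"
    and "inj lam"
    and "\<forall>i. \<not> is_eigenvalue A (lam i)"
  defines "H \<equiv> (\<lambda>i. affine hull (range (kvec A B (lam i))))"
  shows "((\<Inter>i. H i) \<noteq> {} \<longleftrightarrow> controllable A B) \<and>
         (controllable A B \<longrightarrow>
            (\<exists>K. (\<Inter>i. H i) = {K} \<and>
                 (\<forall>x::real. det (x *\<^sub>R mat 1 - A + outer B K) = (\<Prod>i\<in>UNIV. x - lam i))))"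
proof -
  define Ai where "Ai i = A - lam i *\<^sub>R mat 1" for i
  have invAi: "invertible (Ai i)" for i unfolding Ai_def using assms(3) by (simp add: not_eig_inv)
  have "\<forall>i. \<exists>A'. Ai i ** A' = mat 1 \<and> A' ** Ai i = mat 1" using invAi unfolding invertible_def by blast
  then obtain Ainv where Ainv: "\<And>i. Ai i ** Ainv i = mat 1" "\<And>i. Ainv i ** Ai i = mat 1" by metis
  define v where "v i = Ainv i *v B" for i
  have Aiv: "Ai i *v v i = B" for i using Ainv(1)[of i] by (simp add: v_def matrix_vector_mul_assoc)
  have Av: "A *v v i = B + lam i *\<^sub>R v i" for i using Aiv[of i] unfolding Ai_def mv_shift by (simp add: algebra_simps)
  have Hc: "H i = {K. K \<bullet> v i = 1}" for i
    unfolding H_def v_def using H_char[OF assms(1), of "Ainv i" A "lam i"] Ainv[of i] by (simp add: Ai_def)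
  hence Int: "(\<Inter>i. H i) = {K. \<forall>i. K \<bullet> v i = 1}" by auto
  define M :: "real^'n^'n" where "M = (\<chi> r j. v j $ r)"
  define g where "g k = matpow A k *v B" for k
  have gS: "g (Suc k) = A *v g k" for k by (simp add: g_def matrix_vector_mul_assoc)
  have ctrl: "controllable A B \<longleftrightarrow> span (range g) = UNIV"
    using ctrl_iff[of A B] span_all[of A B] by (simp add: g_def)
  have AW: "A *v y \<in> span (range g)" if "y \<in> span (range g)" for y
  proof -
    have "(*v) A ` range g \<subseteq> span (range g)" by (auto simp flip: gS intro: span_base)
    hence "span ((*v) A ` range g) \<subseteq> span (range g)" by (simp add: span_minimal)
    moreover have "A *v y \<in> (*v) A ` span (range g)" using that by blast
    ultimately show ?thesis by (simp add: real_vector.linear_span_image matrix_vector_mul_linear) blast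
  qed
  have vW: "v i \<in> span (range g)" for i
  proof -
    have "\<exists>w\<in>span (range g). Ai i *v w = B"
    proof (rule inv_in_W)
      show "subspace (span (range g))" by (rule subspace_span)
      have "g 0 \<in> span (range g)" by (rule span_base) simp
      thus "B \<in> span (range g)" by (simp add: g_def)
      show "invertible (Ai i)" by (rule invAi)
      fix y assume "y \<in> span (range g)"
      thus "Ai i *v y \<in> span (range g)" using AW by (simp add: Ai_def mv_shift span_diff span_scale)
    qed
    then obtain w where w: "w \<in> span (range g)" "Ai i *v w = B" by blast
    have "w = v i" using w(2) Aiv[of i] inj_matrix_vector_mult[OF invAi[of i]] by (auto dest: injD)
    thus ?thesis using w by simp
  qed
  have Mker: "invertible M \<longleftrightarrow> (\<forall>c. (\<Sum>j\<in>UNIV. c$j *\<^sub>R v j) = 0 \<longrightarrow> c = 0)"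
    unfolding invertible_left_inverse matrix_left_invertible_ker M_def mv_cols by blast
  have Mspan: "invertible M \<longleftrightarrow> span (range v) = UNIV"
    unfolding invertible_right_inverse matrix_right_invertible_span_columns M_def cols_M span_vec_eq by blast
  have b: "controllable A B" if ne: "(\<Inter>i. H i) \<noteq> {}"
  proof -
    obtain K where K: "\<And>i. K \<bullet> v i = 1" using ne Int by auto
    have hyp: "(\<Sum>i\<in>UNIV. c$i) = 0" if "(\<Sum>i\<in>UNIV. c$i *\<^sub>R v i) = 0" for c :: "real^'n"
    proof -
      have "K \<bullet> (\<Sum>i\<in>UNIV. c$i *\<^sub>R v i) = (\<Sum>i\<in>UNIV. c$i)" by (simp add: inner_sum_right K)
      thus ?thesis using that by simp
    qed
    have "invertible M" unfolding Mker using supp_lemma[OF Av assms(2) hyp] by blast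
    hence "span (range v) = UNIV" using Mspan by simp
    moreover have "span (range v) \<subseteq> span (range g)" by (rule span_minimal) (auto simp: vW subspace_span)
    ultimately show ?thesis using ctrl by auto
  qed
  have a: "invertible M" if c: "controllable A B"
  proof (rule ccontr)
    assume ni: "\<not> invertible M"
    have "\<not> (\<forall>c::real^'n. (\<Sum>i\<in>UNIV. c$i *\<^sub>R v i) = 0 \<longrightarrow> (\<Sum>i\<in>UNIV. c$i) = 0)"
    proof
      assume h: "\<forall>c::real^'n. (\<Sum>i\<in>UNIV. c$i *\<^sub>R v i) = 0 \<longrightarrow> (\<Sum>i\<in>UNIV. c$i) = 0"
      have "invertible M" unfolding Mker using supp_lemma[OF Av assms(2)] h by blast
      thus False using ni by simp
    qed
    then obtain c :: "real^'n" where c0: "(\<Sum>i\<in>UNIV. c$i *\<^sub>R v i) = 0" and s: "(\<Sum>i\<in>UNIV. c$i) \<noteq> 0" by blast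
    have "A *v (\<Sum>i\<in>UNIV. c$i *\<^sub>R v i) = 0" using c0 by simp
    hence "(\<Sum>i\<in>UNIV. c$i *\<^sub>R (B + lam i *\<^sub>R v i)) = 0" by (simp add: Amv_sum Av)
    hence "(\<Sum>i\<in>UNIV. c$i) *\<^sub>R B + (\<Sum>i\<in>UNIV. (c$i * lam i) *\<^sub>R v i) = 0"
      by (simp add: scaleR_add_right sum.distrib scaleR_sum_left)
    hence sB: "(\<Sum>i\<in>UNIV. c$i) *\<^sub>R B = - (\<Sum>i\<in>UNIV. (c$i * lam i) *\<^sub>R v i)"
      by (simp add: eq_neg_iff_add_eq_0)
    have XU: "- (\<Sum>i\<in>UNIV. (c$i * lam i) *\<^sub>R v i) \<in> span (range v)"
      apply (rule span_neg) apply (rule span_sum) apply (rule span_scale) apply (rule span_base) by blast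
    have "B = (1 / (\<Sum>i\<in>UNIV. c$i)) *\<^sub>R ((\<Sum>i\<in>UNIV. c$i) *\<^sub>R B)" using s by simp
    hence BU: "B \<in> span (range v)" using span_scale[OF XU] sB by metis
    have AU: "A *v y \<in> span (range v)" if "y \<in> span (range v)" for y
    proof -
      have "A *v v i \<in> span (range v)" for i
        unfolding Av by (rule span_add[OF BU span_scale[OF span_base]]) blast
      hence "(*v) A ` range v \<subseteq> span (range v)" by blast
      hence "span ((*v) A ` range v) \<subseteq> span (range v)" by (simp add: span_minimal)
      moreover have "A *v y \<in> (*v) A ` span (range v)" using that by blast
      ultimately show ?thesis by (simp add: real_vector.linear_span_image matrix_vector_mul_linear) blast
    qed
    have "g k \<in> span (range v)" for k
      by (induction k) (auto simp: gS AU, simp add: g_def BU)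
    hence "span (range g) \<subseteq> span (range v)" by (intro span_minimal) (auto simp: subspace_span)
    hence "span (range v) = UNIV" using c ctrl by auto
    thus False using ni Mspan by simp
  qed
  have cc: "\<exists>K. (\<Inter>i. H i) = {K} \<and> (\<forall>x::real. det (x *\<^sub>R mat 1 - A + outer B K) = (\<Prod>i\<in>UNIV. x - lam i))"
    if c: "controllable A B"
  proof -
    have iM: "invertible M" using a c by blast
    hence "invertible (transpose M)" by (rule transpose_invertible)
    then obtain T where T: "T ** transpose M = mat 1" "transpose M ** T = mat 1" unfolding invertible_def by blast
    define K0 :: "real^'n" where "K0 = T *v (\<chi> j. 1)"
    have "transpose M *v K0 = (\<chi> j. 1)" using T(2) by (simp add: K0_def matrix_vector_mul_assoc)
    hence "(\<chi> j. K0 \<bullet> v j) = (\<chi> j. (1::real))" unfolding M_def tmv_cols .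
    hence K0v: "K0 \<bullet> v j = 1" for j by (simp add: vec_eq_iff)
    have uniq: "K = K0" if "\<And>j. K \<bullet> v j = 1" for K
    proof -
      have "transpose M *v K = transpose M *v K0" unfolding M_def tmv_cols using that K0v by (simp add: vec_eq_iff)
      hence "T *v (transpose M *v K) = T *v (transpose M *v K0)" by simp
      thus ?thesis using T(1) by (metis matrix_vector_mul_assoc matrix_vector_mul_lid)
    qed
    have I: "(\<Inter>i. H i) = {K0}" unfolding Int using K0v uniq by blast
    have detf: "det (x *\<^sub>R mat 1 - A + outer B K0) = (\<Prod>i\<in>UNIV. x - lam i)" for x
    proof -
      define X where "X = x *\<^sub>R mat 1 - A + outer B K0"
      define D :: "real^'n^'n" where "D = (\<chi> i j. if i = j then x - lam i else 0)"
      have Xv: "X *v v j = (x - lam j) *\<^sub>R v j" for j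
        by (simp add: X_def matrix_vector_mult_add_rdistrib matrix_vector_mult_diff_rdistrib
              outer_mv K0v Av algebra_simps flip: scaleR_matrix_vector_assoc)
      have "X ** M = M ** D"
      proof -
        have "(X ** M) $ r $ j = (X *v v j) $ r" for r j
          by (simp add: matrix_matrix_mult_def matrix_vector_mult_def M_def)
        moreover have "(M ** D) $ r $ j = (x - lam j) * v j $ r" for r j
        proof -
          have "(M ** D) $ r $ j = (\<Sum>k\<in>UNIV. if k = j then v j $ r * (x - lam j) else 0)"
            unfolding matrix_matrix_mult_def M_def D_def vec_lambda_beta by (rule sum.cong) auto
          thus ?thesis by simp
        qed
        ultimately show ?thesis by (simp add: vec_eq_iff Xv)
      qed
      hence "det X * det M = det M * det D" by (metis det_mul)
      moreover have "det M \<noteq> 0" using iM invertible_det_nz by blast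
      ultimately have "det X = det D" by simp
      also have "det D = (\<Prod>i\<in>UNIV. x - lam i)" by (subst det_diagonal) (simp_all add: D_def)
      finally show ?thesis by (simp add: X_def)
    qed
    show ?thesis using I detf by blast
  qed
  have ne: "(\<Inter>i. H i) \<noteq> {}" if "controllable A B" using cc[OF that] by auto
  show ?thesis using b ne cc by blast
qed

end
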